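(* Let $E$ and $E'$ be disjunctive interval multiplicity expressions (DIMEs) over a finite alphabet $\Sigma$. Then $L(E')\subseteq L(E)$ if and only if $\Delta_{E'}\preccurlyeq \Delta_E$.
   Context: Unordered words are functions $w:\Sigma\to\mathbb{N}_0$; $a\in w$ means $w(a)\neq 0$; $\varepsilon$ is the all-zero word; unordered concatenation $\uplus$ is multiset union, extended to languages pointwise. An interval is $[n,m]$ or $[n,m]^?$ with $n\in\mathbb{N}_0$, $m\in\mathbb{N}_0\cup\{\infty\}$; $L(E^{[n,m]})=\{w_1\uplus\dots\uplus w_i\mid n\le i\le m, w_j\in L(E)\}$, $L(E^{[n,m]^?})=L(E^{[n,m]})\cup\{\varepsilon\}$; the multiplicities $*,+,?,1$ denote $[0,\infty],[1,\infty],[0,1],[1,1]$. Also $L(a)=\{a\}$, $L(E_1\mid E_2)=L(E_1)\cup L(E_2)$, $L(E_1\mathbin{|\hspace{-0.1em}|} E_2)=L(E_1)\uplus L(E_2)$. An atom is $(a_1^{I_1}\mathbin{|\hspace{-0.1em}|}\dots\mathbin{|\hspace{-0.1em}|} a_k^{I_k})$ with $a_i\in\Sigma$ and each $I_i\in\{?,1\}$. A clause is $(A_1^{I_1}\mid\dots\mid A_k^{I_k})$ with atoms $A_i$ and intervals $I_i$; it is simple if each $I_i\in\{?,1\}$. A DIME is $(D_1^{I_1}\mathbin{|\hspace{-0.1em}|}\dots\mathbin{|\hspace{-0.1em}|} D_k^{I_k})$ where for each $i$ either $D_i$ is a simple clause and $I_i\in\{+,*\}$, or $D_i$ is a clause and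 $I_i\in\{1,?\}$; moreover each symbol occurs at most once in the DIME. The characterizing tuple of a DIME $E$ is $\Delta_E=(C_E,N_E,P_E,K_E)$ where $C_E=\{(a,b)\in\Sigma\times\Sigma\mid \neg\exists w\in L(E).\ a\in w\wedge b\in w\}$, $N_E=\{(a,w(a))\mid a\in\Sigma, w\in L(E)\}$, $P_E=\{X\subseteq\Sigma\mid\forall w\in L(E).\ \exists a\in X.\ a\in w\}$, $K_E=\{(a,b)\in\Sigma\times\Sigma\mid\forall w\in L(E).\ w(a)\ge w(b)\}$. We write $\Delta_{E'}\preccurlyeq\Delta_E$ if $C_E\subseteq C_{E'}$, $N_{E'}\subseteq N_E$, $P_E\subseteq P_{E'}$ and $K_E\subseteq K_{E'}$. *)

theory Defs
  imports Main "HOL-Library.Multiset" "HOL-Library.Extended_Nat"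
begin

text \<open>Unordered words over the alphabet 'a are finitely supported functions 'a to nat,
  i.e. multisets: w(a) = count w a, a in w iff count w a ~= 0, epsilon = {#},
  unordered concatenation = multiset sum (+).\<close>

type_synonym 'a uword = "'a multiset"

text \<open>Intervals: (n, m, q) stands for [n,m] if q = False and [n,m]^? if q = True;
  m ranges over nat extended with infinity.\<close>
type_synonym interval = "nat \<times> enat \<times> bool"

definition I_star :: interval where "I_star = (0, \<infinity>, False)"
definition I_plus :: interval where "I_plus = (1, \<infinity>, False)"
definition I_opt  :: interval where "I_opt = (0, 1, False)"
definition I_one  :: interval where "I_one = (1, 1, False)"

datatype 'a expr =
    Sym 'a
  | Alt "'a expr list"
  | Par "'a expr list"
  | Rep "'a expr" interval

definition uconc :: "'a uword set \<Rightarrow> 'a uword set \<Rightarrow> 'a uword set" where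
  "uconc L1 L2 = {w1 + w2 | w1 w2. w1 \<in> L1 \<and> w2 \<in> L2}"

definition rep_lang :: "'a uword set \<Rightarrow> interval \<Rightarrow> 'a uword set" where
  "rep_lang L I = (case I of (n, m, q) \<Rightarrow>
     {sum_list ws | ws. n \<le> length ws \<and> enat (length ws) \<le> m \<and> set ws \<subseteq> L}
     \<union> (if q then {{#}} else {}))"

fun lang :: "'a expr \<Rightarrow> 'a uword set" where
  "lang (Sym a) = {{#a#}}"
| "lang (Alt Es) = (\<Union>E\<in>set Es. lang E)"
| "lang (Par Es) = foldr (\<lambda>E acc. uconc (lang E) acc) Es {{#}}"
| "lang (Rep E I) = rep_lang (lang E) I"

fun syms :: "'a expr \<Rightarrow> 'a list" where
  "syms (Sym a) = [a]"
| "syms (Alt Es) = concat (map syms Es)"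
| "syms (Par Es) = concat (map syms Es)"
| "syms (Rep E I) = syms E"

definition is_atom :: "'a expr \<Rightarrow> bool" where
  "is_atom E \<longleftrightarrow> (\<exists>xs. xs \<noteq> [] \<and> E = Par (map (\<lambda>(a, I). Rep (Sym a) I) xs)
      \<and> (\<forall>(a, I) \<in> set xs. I \<in> {I_opt, I_one}))"

definition is_clause :: "'a expr \<Rightarrow> bool" where
  "is_clause E \<longleftrightarrow> (\<exists>xs. xs \<noteq> [] \<and> E = Alt (map (\<lambda>(A, I). Rep A I) xs)
      \<and> (\<forall>(A, I) \<in> set xs. is_atom A))"

definition is_simple_clause :: "'a expr \<Rightarrow> bool" where
  "is_simple_clause E \<longleftrightarrow> (\<exists>xs. xs \<noteq> [] \<and> E = Alt (map (\<lambda>(A, I). Rep A I) xs)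
      \<and> (\<forall>(A, I) \<in> set xs. is_atom A \<and> I \<in> {I_opt, I_one}))"

definition is_DIME :: "'a expr \<Rightarrow> bool" where
  "is_DIME E \<longleftrightarrow> (\<exists>xs. xs \<noteq> [] \<and> E = Par (map (\<lambda>(D, I). Rep D I) xs)
      \<and> (\<forall>(D, I) \<in> set xs. (is_simple_clause D \<and> I \<in> {I_plus, I_star})
                           \<or> (is_clause D \<and> I \<in> {I_one, I_opt})))
    \<and> distinct (syms E)"

definition C_of :: "'a expr \<Rightarrow> ('a \<times> 'a) set" where
  "C_of E = {(a, b). \<not> (\<exists>w \<in> lang E. a \<in># w \<and> b \<in># w)}"

definition N_of :: "'a expr \<Rightarrow> ('a \<times> nat) set" where
  "N_of E = {(a, count w a) | a w. w \<in> lang E}"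

definition P_of :: "'a expr \<Rightarrow> 'a set set" where
  "P_of E = {X. \<forall>w \<in> lang E. \<exists>a \<in> X. a \<in># w}"

definition K_of :: "'a expr \<Rightarrow> ('a \<times> 'a) set" where
  "K_of E = {(a, b). \<forall>w \<in> lang E. count w a \<ge> count w b}"

definition Delta :: "'a expr \<Rightarrow> ('a \<times> 'a) set \<times> ('a \<times> nat) set \<times> 'a set set \<times> ('a \<times> 'a) set" where
  "Delta E = (C_of E, N_of E, P_of E, K_of E)"

definition delta_le :: "('a \<times> 'a) set \<times> ('a \<times> nat) set \<times> 'a set set \<times> ('a \<times> 'a) set
    \<Rightarrow> ('a \<times> 'a) set \<times> ('a \<times> nat) set \<times> 'a set set \<times> ('a \<times> 'a) set \<Rightarrow> bool" where
  "delta_le D' D = (case D' of (C', N', P', K') \<Rightarrow> case D of (C, N, P, K) \<Rightarrow>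
      C \<subseteq> C' \<and> N' \<subseteq> N \<and> P \<subseteq> P' \<and> K \<subseteq> K')"

end

theory Submission
  imports Defs
begin


definition sat :: "'a uword set \<Rightarrow> 'a uword \<Rightarrow> bool" where
 "sat L v \<longleftrightarrow> (\<forall>a b. a \<in># v \<longrightarrow> b \<in># v \<longrightarrow> (\<exists>u\<in>L. a \<in># u \<and> b \<in># u))
   \<and> (\<forall>a. \<exists>u\<in>L. count u a = count v a)
   \<and> (\<forall>X. (\<forall>u\<in>L. \<exists>a\<in>X. a \<in># u) \<longrightarrow> (\<exists>a\<in>X. a \<in># v))
   \<and> (\<forall>a b. (\<forall>u\<in>L. count u b \<le> count u a) \<longrightarrow> count v b \<le> count v a)"

lemma sat_mem: "v \<in> L \<Longrightarrow> sat L v" unfolding sat_def by auto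

lemma sat_mono:
  assumes d: "delta_le (Delta E') (Delta E)" and s: "sat (lang E') w"
  shows "sat (lang E) w"
proof -
  have C: "C_of E \<subseteq> C_of E'" and N: "N_of E' \<subseteq> N_of E" and P: "P_of E \<subseteq> P_of E'"
    and K: "K_of E \<subseteq> K_of E'" using d unfolding delta_le_def Delta_def by auto
  show ?thesis unfolding sat_def
  proof (intro conjI allI impI)
    fix a b assume "a \<in># w" "b \<in># w"
    then obtain u where "u \<in> lang E'" "a \<in># u" "b \<in># u" using s unfolding sat_def by blast
    then have "(a,b) \<notin> C_of E'" unfolding C_of_def by auto
    then have "(a,b) \<notin> C_of E" using C by auto
    then show "\<exists>u\<in>lang E. a \<in># u \<and> b \<in># u" unfolding C_of_def by auto
  next
    fix a
    obtain u where "u \<in> lang E'" "count u a = count w a" using s unfolding sat_def by blast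
    then have "(a, count u a) \<in> N_of E'" unfolding N_of_def by (intro CollectI exI[of _ a] exI[of _ u]) simp
    then have "(a, count w a) \<in> N_of E'" using \<open>count u a = count w a\<close> by simp
    then have "(a, count w a) \<in> N_of E" using N by auto
    then show "\<exists>u\<in>lang E. count u a = count w a" unfolding N_of_def by auto
  next
    fix X assume "\<forall>u\<in>lang E. \<exists>a\<in>X. a \<in># u"
    then have "X \<in> P_of E'" using P unfolding P_of_def by auto
    then show "\<exists>a\<in>X. a \<in># w" using s unfolding sat_def P_of_def by auto
  next
    fix a b assume "\<forall>u\<in>lang E. count u b \<le> count u a"
    then have "(a,b) \<in> K_of E'" using K unfolding K_of_def by auto
    then show "count w b \<le> count w a" using s unfolding sat_def K_of_def by auto
  qed
qed

lemma sat_empty: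
  assumes "sat L {#}" shows "{#} \<in> L"
proof (rule ccontr)
  assume "{#} \<notin> L"
  then have "\<forall>u\<in>L. \<exists>a\<in>UNIV. a \<in># u" by (metis UNIV_I multiset_nonemptyE)
  then have "\<exists>a\<in>UNIV. a \<in># ({#}::'a multiset)" using assms unfolding sat_def by blast
  then show False by simp
qed

lemma set_sum_list_sub: "set ws \<subseteq> L \<Longrightarrow> (\<forall>u\<in>L. set_mset u \<subseteq> S) \<Longrightarrow> set_mset (sum_list ws) \<subseteq> S"
  by auto

lemma par_syms: "u \<in> foldr (\<lambda>E acc. uconc (lang E) acc) Es {{#}} \<Longrightarrow>
   (\<forall>E\<in>set Es. \<forall>u\<in>lang E. set_mset u \<subseteq> set (syms E)) \<Longrightarrow>
   set_mset u \<subseteq> set (concat (map syms Es))"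
proof (induction Es arbitrary: u)
  case Nil then show ?case by simp
next
  case (Cons E Es)
  from Cons.prems(1) obtain w1 w2 where u: "u = w1 + w2" "w1 \<in> lang E"
    "w2 \<in> foldr (\<lambda>E acc. uconc (lang E) acc) Es {{#}}"
    unfolding uconc_def by auto
  have "set_mset w2 \<subseteq> set (concat (map syms Es))" using Cons.IH[OF u(3)] Cons.prems(2) by simp
  moreover have "set_mset w1 \<subseteq> set (syms E)" using Cons.prems(2) u(2) by simp
  ultimately show ?case using u(1) by auto
qed

lemma lang_syms: "u \<in> lang E \<Longrightarrow> set_mset u \<subseteq> set (syms E)"
proof (induction E arbitrary: u)
  case (Sym x) then show ?case by simp
next
  case (Alt Es) then show ?case by fastforce
next
  case (Par Es) then show ?case using par_syms[of u Es] by simp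
next
  case (Rep E I)
  obtain n m q where I: "I = (n,m,q)" by (cases I) auto
  have h: "\<forall>x\<in>lang E. set_mset x \<subseteq> set (syms E)" using Rep.IH by blast
  obtain ws where "u = sum_list ws" "set ws \<subseteq> lang E"
  proof (cases "u = {#}")
    case True then show ?thesis using that[of "[]"] by simp
  next
    case False
    then have "u \<in> {sum_list ws |ws. n \<le> length ws \<and> enat (length ws) \<le> m \<and> set ws \<subseteq> lang E}"
      using Rep.prems unfolding I by (simp add: rep_lang_def split: if_splits)
    then show ?thesis using that by blast
  qed
  then show ?case using set_sum_list_sub[of ws "lang E" "set (syms E)"] h by simp
qed



definition inpow :: "'a set \<Rightarrow> 'a set \<Rightarrow> nat \<Rightarrow> 'a uword \<Rightarrow> bool" where
 "inpow M S k u \<longleftrightarrow> (\<forall>a\<in>M. count u a = k) \<and> (\<forall>a\<in>S. count u a \<le> k) \<and> (\<forall>a. a \<notin> S \<longrightarrow> count u a = 0)"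

lemma inpow_0: "inpow M S 0 u \<Longrightarrow> u = {#}"
  unfolding inpow_def by (intro multiset_eqI) (metis count_empty le_zero_eq)

lemma pow_sum: "set ws \<subseteq> {w. inpow M S 1 w} \<Longrightarrow> inpow M S (length ws) (sum_list ws)"
proof (induction ws)
  case Nil then show ?case by (simp add: inpow_def)
next
  case (Cons w ws)
  then have h: "inpow M S 1 w" "inpow M S (length ws) (sum_list ws)" by auto
  have "count w a + count (sum_list ws) a \<le> Suc (length ws)" if "a \<in> S" for a
  proof -
    have "count w a \<le> 1" "count (sum_list ws) a \<le> length ws" using h that unfolding inpow_def by auto
    then show ?thesis by linarith
  qed
  then show ?case using h unfolding inpow_def by auto
qed

lemma pow_split: "M \<subseteq> S \<Longrightarrow> inpow M S k u \<Longrightarrow>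
   \<exists>ws. length ws = k \<and> set ws \<subseteq> {w. inpow M S 1 w} \<and> sum_list ws = u"
proof (induction k arbitrary: u)
  case 0 then show ?case using inpow_0 by (intro exI[of _ "[]"]) auto
next
  case (Suc k)
  define w where "w = mset_set (set_mset u)"
  have cw: "count w a = (if a \<in># u then 1 else 0)" for a unfolding w_def by simp
  have sub: "w \<subseteq># u" unfolding subseteq_mset_def using cw by (simp add: Suc_leI)
  have m1: "a \<in># u" if "a \<in> M" for a using Suc.prems that unfolding inpow_def
    by (metis count_eq_zero_iff nat.distinct(1))
  have m2: "a \<in> S" if "a \<in># u" for a using Suc.prems that unfolding inpow_def
    by (metis count_eq_zero_iff)
  have i1: "inpow M S 1 w" using m1 m2 unfolding inpow_def cw
    by (auto split: if_splits)
  have i2: "inpow M S k (u - w)" using Suc.prems m1 unfolding inpow_def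
    by (auto simp: cw not_in_iff split: if_splits)
  obtain ws where ws: "length ws = k" "set ws \<subseteq> {w. inpow M S 1 w}" "sum_list ws = u - w"
    using Suc.IH[OF Suc.prems(1) i2] by blast
  show ?case using ws i1 sub by (intro exI[of _ "w # ws"]) auto
qed

lemma enat_le_1: "enat n \<le> 1 \<longleftrightarrow> n \<le> 1" by (simp add: one_enat_def)

lemma rep_one: "rep_lang L I_one = L"
proof (intro set_eqI iffI)
  fix u assume "u \<in> rep_lang L I_one"
  then obtain ws where "u = sum_list ws" "length ws = 1" "set ws \<subseteq> L"
    unfolding rep_lang_def I_one_def by (auto simp: enat_le_1)
  then show "u \<in> L" by (auto simp: length_Suc_conv)
next
  fix u assume "u \<in> L"
  then have "u = sum_list [u] \<and> 1 \<le> length [u] \<and> enat (length [u]) \<le> 1 \<and> set [u] \<subseteq> L" by (simp add: enat_le_1)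
  then show "u \<in> rep_lang L I_one" unfolding rep_lang_def I_one_def by blast
qed

lemma rep_opt: "rep_lang L I_opt = insert {#} L"
proof (intro set_eqI iffI)
  fix u assume "u \<in> rep_lang L I_opt"
  then obtain ws where "u = sum_list ws" "length ws \<le> 1" "set ws \<subseteq> L"
    unfolding rep_lang_def I_opt_def by (auto simp: enat_le_1)
  then show "u \<in> insert {#} L" by (cases ws) auto
next
  fix u assume "u \<in> insert {#} L"
  then have "(u = sum_list [u] \<and> 0 \<le> length [u] \<and> enat (length [u]) \<le> 1 \<and> set [u] \<subseteq> L)
     \<or> (u = sum_list [] \<and> 0 \<le> length ([]::'a uword list) \<and> enat (length ([]::'a uword list)) \<le> 1 \<and> set [] \<subseteq> L)" by (auto simp: enat_le_1)
  then show "u \<in> rep_lang L I_opt" unfolding rep_lang_def I_opt_def by blast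
qed

lemma rep_pow:
  assumes "M \<subseteq> S"
  shows "rep_lang {u. inpow M S 1 u} (n,m,q) =
    {u. \<exists>k. n \<le> k \<and> enat k \<le> m \<and> inpow M S k u} \<union> (if q then {{#}} else {})"
proof (intro set_eqI iffI)
  fix u assume "u \<in> rep_lang {u. inpow M S 1 u} (n,m,q)"
  then consider "q" "u = {#}" | ws where "u = sum_list ws" "n \<le> length ws" "enat (length ws) \<le> m"
    "set ws \<subseteq> {u. inpow M S 1 u}"
    unfolding rep_lang_def by (auto split: if_splits)
  then show "u \<in> {u. \<exists>k. n \<le> k \<and> enat k \<le> m \<and> inpow M S k u} \<union> (if q then {{#}} else {})"
  proof cases
    case 1 then show ?thesis by simp
  next
    case 2 then show ?thesis using pow_sum[OF 2(4)] by auto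
  qed
next
  fix u assume "u \<in> {u. \<exists>k. n \<le> k \<and> enat k \<le> m \<and> inpow M S k u} \<union> (if q then {{#}} else {})"
  then consider "q" "u = {#}" | k where "n \<le> k" "enat k \<le> m" "inpow M S k u"
    by (auto split: if_splits)
  then show "u \<in> rep_lang {u. inpow M S 1 u} (n,m,q)"
  proof cases
    case 1 then show ?thesis unfolding rep_lang_def by simp
  next
    case 2
    obtain ws where "length ws = k" "set ws \<subseteq> {w. inpow M S 1 w}" "sum_list ws = u"
      using pow_split[OF assms 2(3)] by blast
    then show ?thesis using 2 unfolding rep_lang_def by auto
  qed
qed

lemma inpow_cons1:
  assumes "a \<notin> S" "M \<subseteq> S"
  shows "inpow (insert a M) (insert a S) 1 u \<longleftrightarrow> (\<exists>v. u = add_mset a v \<and> inpow M S 1 v)"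
proof
  assume h: "inpow (insert a M) (insert a S) 1 u"
  then have "count u a = 1" unfolding inpow_def by auto
  then have "a \<in># u" by (simp add: count_inI)
  then have u: "u = add_mset a (u - {#a#})" by simp
  have "inpow M S 1 (u - {#a#})" using h assms \<open>count u a = 1\<close> unfolding inpow_def
    by (auto split: if_splits)
  then show "\<exists>v. u = add_mset a v \<and> inpow M S 1 v" using u by blast
next
  assume "\<exists>v. u = add_mset a v \<and> inpow M S 1 v"
  then obtain v where "u = add_mset a v" "inpow M S 1 v" by blast
  then show "inpow (insert a M) (insert a S) 1 u" using assms unfolding inpow_def by auto
qed

lemma inpow_cons2:
  assumes "a \<notin> S" "M \<subseteq> S"
  shows "inpow M (insert a S) 1 u \<longleftrightarrow> (\<exists>v. (u = add_mset a v \<or> u = v) \<and> inpow M S 1 v)"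
proof
  assume h: "inpow M (insert a S) 1 u"
  show "\<exists>v. (u = add_mset a v \<or> u = v) \<and> inpow M S 1 v"
  proof (cases "a \<in># u")
    case True
    then have u: "u = add_mset a (u - {#a#})" by simp
    have "count u a \<le> 1" using h unfolding inpow_def by auto
    then have "inpow M S 1 (u - {#a#})" using h assms unfolding inpow_def
      by (auto split: if_splits)
    then show ?thesis using u by blast
  next
    case False
    then have "inpow M S 1 u" using h assms unfolding inpow_def
      by (auto simp: not_in_iff split: if_splits) metis
    then show ?thesis by blast
  qed
next
  assume "\<exists>v. (u = add_mset a v \<or> u = v) \<and> inpow M S 1 v"
  then obtain v where "u = add_mset a v \<or> u = v" "inpow M S 1 v" by blast
  then show "inpow M (insert a S) 1 u" using assms unfolding inpow_def by auto
qed



lemma I_opt_ne_one: "I_opt \<noteq> I_one" by (simp add: I_opt_def I_one_def)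

lemma atom_lang_aux:
  assumes "distinct (map fst xs)" "\<forall>(a,I)\<in>set xs. I \<in> {I_opt, I_one}"
  shows "foldr (\<lambda>E acc. uconc (lang E) acc) (map (\<lambda>(a,I). Rep (Sym a) I) xs) {{#}}
     = {u. inpow {a. (a,I_one) \<in> set xs} (fst ` set xs) 1 u}"
  using assms
proof (induction xs)
  case Nil
  have "inpow {} {} 1 u \<longleftrightarrow> u = {#}" for u :: "'a uword"
    unfolding inpow_def by (auto intro: multiset_eqI)
  then show ?case by auto
next
  case (Cons p xs)
  obtain a I where p: "p = (a,I)" by (cases p) auto
  define M' where "M' = {a. (a,I_one) \<in> set xs}"
  define S' where "S' = fst ` set xs"
  have aS: "a \<notin> S'" using Cons.prems(1) unfolding p S'_def by auto
  have MS: "M' \<subseteq> S'" unfolding M'_def S'_def by force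
  have IH: "foldr (\<lambda>E acc. uconc (lang E) acc) (map (\<lambda>(a,I). Rep (Sym a) I) xs) {{#}}
     = {u. inpow M' S' 1 u}" using Cons unfolding M'_def S'_def by auto
  have S: "fst ` set (p # xs) = insert a S'" unfolding p S'_def by simp
  have I: "I = I_one \<or> I = I_opt" using Cons.prems(2) unfolding p by auto
  then show ?case
  proof
    assume I1: "I = I_one"
    have M: "{a. (a,I_one) \<in> set (p # xs)} = insert a M'" unfolding p M'_def I1 by auto
    have "uconc {{#a#}} {u. inpow M' S' 1 u} = {u. inpow (insert a M') (insert a S') 1 u}"
      unfolding inpow_cons1[OF aS MS] uconc_def by auto
    then show ?thesis unfolding M S using IH by (simp add: p I1 rep_one)
  next
    assume I2: "I = I_opt"
    have M: "{a. (a,I_one) \<in> set (p # xs)} = M'" unfolding p M'_def I2 using I_opt_ne_one aS S'_def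
      by force
    have "uconc (insert {#} {{#a#}}) {u. inpow M' S' 1 u} = {u. inpow M' (insert a S') 1 u}"
      unfolding inpow_cons2[OF aS MS] uconc_def by auto (metis add_mset_add_single add.commute, metis add.left_neutral)
    then show ?thesis unfolding M S using IH by (simp add: p I2 rep_opt)
  qed
qed

definition Mof :: "'a expr \<Rightarrow> 'a set" where
  "Mof A = (SOME M. M \<subseteq> set (syms A) \<and> lang A = {u. inpow M (set (syms A)) 1 u})"

lemma atom_lang:
  assumes "is_atom A" "distinct (syms A)"
  shows "Mof A \<subseteq> set (syms A)" "lang A = {u. inpow (Mof A) (set (syms A)) 1 u}"
proof -
  obtain xs where xs: "A = Par (map (\<lambda>(a, I). Rep (Sym a) I) xs)"
     "\<forall>(a, I) \<in> set xs. I \<in> {I_opt, I_one}"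
    using assms(1) unfolding is_atom_def by blast
  have sy: "syms A = map fst xs" unfolding xs(1) by (induction xs) auto
  have "\<exists>M. M \<subseteq> set (syms A) \<and> lang A = {u. inpow M (set (syms A)) 1 u}"
    using atom_lang_aux[of xs] assms(2) xs unfolding sy by (intro exI[of _ "{a. (a,I_one) \<in> set xs}"]) force
  then have "Mof A \<subseteq> set (syms A) \<and> lang A = {u. inpow (Mof A) (set (syms A)) 1 u}"
    unfolding Mof_def by (rule someI_ex)
  then show "Mof A \<subseteq> set (syms A)" "lang A = {u. inpow (Mof A) (set (syms A)) 1 u}" by auto
qed



lemma satD:
  assumes "sat L v"
  shows "a \<in># v \<Longrightarrow> b \<in># v \<Longrightarrow> \<exists>u\<in>L. a \<in># u \<and> b \<in># u"
    and "\<exists>u\<in>L. count u a = count v a"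
    and "(\<forall>u\<in>L. \<exists>a\<in>X. a \<in># u) \<Longrightarrow> \<exists>a\<in>X. a \<in># v"
    and "(\<forall>u\<in>L. count u b \<le> count u a) \<Longrightarrow> count v b \<le> count v a"
  using assms unfolding sat_def by meson+

lemma inpow_out: "inpow M S k u \<Longrightarrow> a \<in># u \<Longrightarrow> a \<in> S"
  unfolding inpow_def by (metis count_eq_zero_iff)

lemma clause_core:
  fixes L :: "'a uword set" and Ix :: "'i set"
  assumes sat: "sat L v" and ne: "v \<noteq> {#}"
  and H1: "\<And>u. u \<in> L \<Longrightarrow> u \<noteq> {#} \<Longrightarrow> \<exists>i\<in>Ix. \<exists>k. n i \<le> k \<and> enat k \<le> m i \<and> inpow (M i) (S i) k u"
  and H2: "\<And>i k u. i \<in> Ix \<Longrightarrow> n i \<le> k \<Longrightarrow> enat k \<le> m i \<Longrightarrow> inpow (M i) (S i) k u \<Longrightarrow> u \<in> L"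
  and disj: "\<And>i j. i \<in> Ix \<Longrightarrow> j \<in> Ix \<Longrightarrow> i \<noteq> j \<Longrightarrow> S i \<inter> S j = {}"
  and MS: "\<And>i. i \<in> Ix \<Longrightarrow> M i \<subseteq> S i"
  shows "v \<in> L"
proof -
  note s1 = satD(1)[OF sat] and s2 = satD(2)[OF sat] and s4 = satD(4)[OF sat]
  have key: "\<exists>i\<in>Ix. \<exists>k. n i \<le> k \<and> enat k \<le> m i \<and> inpow (M i) (S i) k u \<and> a \<in> S i"
    if uu: "u \<in> L" "a \<in># u" for u a
  proof -
    have "u \<noteq> {#}" using uu by auto
    then obtain i k where "i \<in> Ix" "n i \<le> k" "enat k \<le> m i" "inpow (M i) (S i) k u"
      using H1[OF uu(1)] by blast
    moreover have "a \<in> S i" using inpow_out[OF \<open>inpow (M i) (S i) k u\<close> uu(2)] .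
    ultimately show ?thesis by blast
  qed
  obtain a where a: "a \<in># v" using ne by (cases v) auto
  obtain u0 where u0: "u0 \<in> L" "count u0 a = count v a" using s2 by blast
  then have "a \<in># u0" using a by (metis count_eq_zero_iff)
  then obtain i k0 where i: "i \<in> Ix" "n i \<le> k0" "enat k0 \<le> m i" "inpow (M i) (S i) k0 u0" "a \<in> S i"
    using key u0(1) by blast
  have "enat (n i) \<le> enat k0" using i(2) by simp
  then have nm: "enat (n i) \<le> m i" using i(3) by (rule order_trans)
  have vS: "b \<in> S i" if bv: "b \<in># v" for b
  proof -
    obtain u where u: "u \<in> L" "a \<in># u" "b \<in># u" using s1[OF a bv] by blast
    obtain j k where j: "j \<in> Ix" "inpow (M j) (S j) k u" "a \<in> S j" using key[OF u(1,2)] by blast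
    have "j = i" using disj[OF j(1) i(1)] j(3) i(5) by blast
    then show ?thesis using inpow_out[OF j(2) u(3)] by simp
  qed
  have vout: "count v b = 0" if "b \<notin> S i" for b using vS that by (metis count_eq_zero_iff)
  show ?thesis
  proof (cases "M i = {}")
    case False
    then obtain c where c: "c \<in> M i" by blast
    have cS: "c \<in> S i" using c MS[OF i(1)] by blast
    have dom: "count v d \<le> count v c" if d: "d \<in> S i" for d
    proof (rule s4, intro ballI)
      fix u assume u: "u \<in> L"
      show "count u d \<le> count u c"
      proof (cases "u = {#}")
        case True then show ?thesis by simp
      next
        case False
        then obtain j k where j: "j \<in> Ix" "inpow (M j) (S j) k u" using H1[OF u] by blast
        show ?thesis
        proof (cases "j = i")
          case True then show ?thesis using j(2) c d unfolding inpow_def by auto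
        next
          case False
          then have "d \<notin> S j" using disj[OF j(1) i(1)] d by blast
          then show ?thesis using j(2) unfolding inpow_def by auto
        qed
      qed
    qed
    have dom2: "count v c \<le> count v d" if d: "d \<in> M i" for d
    proof (rule s4, intro ballI)
      fix u assume u: "u \<in> L"
      show "count u c \<le> count u d"
      proof (cases "u = {#}")
        case True then show ?thesis by simp
      next
        case False
        then obtain j k where j: "j \<in> Ix" "inpow (M j) (S j) k u" using H1[OF u] by blast
        show ?thesis
        proof (cases "j = i")
          case True then show ?thesis using j(2) c d unfolding inpow_def by auto
        next
          case False
          then have "c \<notin> S j" using disj[OF j(1) i(1)] cS by blast
          then show ?thesis using j(2) unfolding inpow_def by auto
        qed
      qed
    qed
    define k where "k = count v c"
    have kpos: "k > 0"
    proof (rule ccontr)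
      assume "\<not> k > 0"
      then have "count v c = 0" unfolding k_def by (simp add: not_in_iff)
      then have "count v a = 0" using dom[OF i(5)] by simp
      then show False using a by (metis count_eq_zero_iff)
    qed
    obtain u1 where u1: "u1 \<in> L" "count u1 c = k" using s2 unfolding k_def by blast
    then have cu1: "c \<in># u1" using kpos by (metis count_eq_zero_iff gr_implies_not0)
    obtain j k1 where j: "j \<in> Ix" "n j \<le> k1" "enat k1 \<le> m j" "inpow (M j) (S j) k1 u1" "c \<in> S j"
      using key[OF u1(1) cu1] by blast
    have "j = i" using disj[OF j(1) i(1)] j(5) cS by blast
    then have "k1 = k" using j(4) c u1(2) unfolding inpow_def by auto
    then have kb: "n i \<le> k" "enat k \<le> m i" using j \<open>j = i\<close> by auto
    have eqk: "count v d = k" if "d \<in> M i" for d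
      using dom[of d] dom2[OF that] MS[OF i(1)] that unfolding k_def by (meson antisym subsetD)
    have "inpow (M i) (S i) k v"
      unfolding inpow_def using dom eqk vout unfolding k_def by auto
    then show ?thesis using H2[OF i(1) kb] by blast
  next
    case True
    define K where "K = Max (count v ` set_mset v)"
    define k where "k = max (n i) K"
    have cb: "enat (count v b) \<le> m i" if b: "b \<in># v" for b
    proof -
      obtain u where u: "u \<in> L" "count u b = count v b" using s2 by blast
      then have "b \<in># u" using b by (metis count_eq_zero_iff)
      then obtain j k1 where j: "j \<in> Ix" "n j \<le> k1" "enat k1 \<le> m j" "inpow (M j) (S j) k1 u" "b \<in> S j"
        using key[OF u(1)] by blast
      have "j = i" using disj[OF j(1) i(1)] j(5) vS[OF b] by blast
      have "count u b \<le> k1" using j(4,5) unfolding inpow_def by auto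
      then have "enat (count u b) \<le> enat k1" by simp
      then have "enat (count u b) \<le> m j" using j(3) by (rule order_trans)
      then show ?thesis using u(2) \<open>j = i\<close> by simp
    qed
    have "K \<in> count v ` set_mset v" unfolding K_def using a by (intro Max_in) auto
    then have "enat K \<le> m i" using cb by auto
    then have kb: "enat k \<le> m i" using nm unfolding k_def by (cases "n i \<le> K") (auto simp: max_def)
    have le: "count v d \<le> k" for d
    proof (cases "d \<in># v")
      case True
      then have "count v d \<le> K" unfolding K_def by (intro Max_ge) auto
      then show ?thesis unfolding k_def by simp
    next
      case False then show ?thesis by (simp add: not_in_iff)
    qed
    have "inpow (M i) (S i) k v" unfolding inpow_def using True le vout by auto
    then show ?thesis using H2[OF i(1) _ kb] unfolding k_def by simp
  qed
qed



lemma combine: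
  assumes "\<forall>i\<in>set ixs. \<exists>ws. sum_list ws = filter_mset (\<lambda>a. a \<in> S i) v \<and> set ws \<subseteq> G"
    and "set_mset v \<subseteq> (\<Union>i\<in>set ixs. S i)"
    and "\<forall>i\<in>set ixs. \<forall>j\<in>set ixs. i \<noteq> j \<longrightarrow> S i \<inter> S j = {}"
  shows "\<exists>ws. sum_list ws = v \<and> set ws \<subseteq> G"
  using assms
proof (induction ixs arbitrary: v)
  case Nil
  then have "v = {#}" by auto
  then show ?case by (intro exI[of _ "[]"]) simp
next
  case (Cons i ixs)
  define v2 where "v2 = filter_mset (\<lambda>a. a \<notin> S i) v"
  have v: "v = filter_mset (\<lambda>a. a \<in> S i) v + v2" unfolding v2_def by (rule multiset_partition)
  obtain ws1 where ws1: "sum_list ws1 = filter_mset (\<lambda>a. a \<in> S i) v" "set ws1 \<subseteq> G"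
    using Cons.prems(1) by auto
  have f2: "\<exists>ws. sum_list ws = filter_mset (\<lambda>a. a \<in> S j) v2 \<and> set ws \<subseteq> G" if j: "j \<in> set ixs" for j
  proof (cases "j = i")
    case True
    have "filter_mset (\<lambda>a. a \<in> S j) v2 = {#}" unfolding v2_def True by (simp add: filter_filter_mset)
    then show ?thesis by (intro exI[of _ "[]"]) simp
  next
    case False
    have d: "S j \<inter> S i = {}" using Cons.prems(3) j False by auto
    have "filter_mset (\<lambda>a. a \<in> S j) v2 = filter_mset (\<lambda>a. a \<in> S j) v"
      unfolding v2_def by (rule multiset_eqI) (use d in auto)
    then show ?thesis using Cons.prems(1) j by auto
  qed
  have "set_mset v2 \<subseteq> (\<Union>i\<in>set ixs. S i)" using Cons.prems(2) unfolding v2_def by auto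
  moreover have "\<forall>i\<in>set ixs. \<forall>j\<in>set ixs. i \<noteq> j \<longrightarrow> S i \<inter> S j = {}" using Cons.prems(3) by auto
  ultimately obtain ws2 where ws2: "sum_list ws2 = v2" "set ws2 \<subseteq> G"
    using Cons.IH f2 by blast
  show ?case using ws1 ws2 v by (intro exI[of _ "ws1 @ ws2"]) auto
qed

lemma star_core:
  fixes L :: "'a uword set" and Ix :: "'i set"
  assumes sat: "sat L v" and ne: "v \<noteq> {#}"
  and H1: "\<And>u i c d. u \<in> L \<Longrightarrow> i \<in> Ix \<Longrightarrow> c \<in> M i \<Longrightarrow> d \<in> S i \<Longrightarrow> count u d \<le> count u c"
  and H1': "\<And>u a. u \<in> L \<Longrightarrow> a \<in># u \<Longrightarrow> \<exists>i\<in>Ix. a \<in> S i"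
  and H2: "\<And>ws. ws \<noteq> [] \<Longrightarrow> \<forall>w\<in>set ws. \<exists>i\<in>Ix. inpow (M i) (S i) 1 w \<Longrightarrow> sum_list ws \<in> L"
  and disj: "\<And>i j. i \<in> Ix \<Longrightarrow> j \<in> Ix \<Longrightarrow> i \<noteq> j \<Longrightarrow> S i \<inter> S j = {}"
  and MS: "\<And>i. i \<in> Ix \<Longrightarrow> M i \<subseteq> S i"
  and fin: "finite Ix"
  shows "v \<in> L"
proof -
  note s2 = satD(2)[OF sat] and s4 = satD(4)[OF sat]
  define G where "G = {w. \<exists>i\<in>Ix. inpow (M i) (S i) 1 w}"
  have vsym: "set_mset v \<subseteq> (\<Union>i\<in>Ix. S i)"
  proof
    fix a assume a: "a \<in># v"
    obtain u where u: "u \<in> L" "count u a = count v a" using s2 by blast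
    then have "a \<in># u" using a by (metis count_eq_zero_iff)
    then show "a \<in> (\<Union>i\<in>Ix. S i)" using H1'[OF u(1)] by blast
  qed
  have each: "\<exists>ws. sum_list ws = filter_mset (\<lambda>a. a \<in> S i) v \<and> set ws \<subseteq> G" if i: "i \<in> Ix" for i
  proof -
    define vi where "vi = filter_mset (\<lambda>a. a \<in> S i) v"
    have "\<exists>k. inpow (M i) (S i) k vi"
    proof (cases "M i = {}")
      case False
      then obtain c where c: "c \<in> M i" by blast
      have cS: "c \<in> S i" using c MS[OF i] by blast
      have dom: "count v d \<le> count v c" if "d \<in> S i" for d
        using s4 H1[OF _ i c that] by blast
      have eq: "count v d = count v c" if "d \<in> M i" for d
        using dom[of d] s4 H1[OF _ i that cS] MS[OF i] that by (meson antisym subsetD)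
      have "inpow (M i) (S i) (count v c) vi" unfolding inpow_def vi_def using dom eq MS[OF i]
        by auto
      then show ?thesis by blast
    next
      case True
      define K where "K = Max (insert 0 (count v ` set_mset v))"
      have le: "count v d \<le> K" for d
      proof (cases "d \<in># v")
        case True
        then show ?thesis unfolding K_def by (intro Max_ge) auto
      next
        case False then show ?thesis by (simp add: not_in_iff)
      qed
      have "inpow (M i) (S i) K vi" unfolding inpow_def vi_def using True le by auto
      then show ?thesis by blast
    qed
    then obtain k where "inpow (M i) (S i) k vi" by blast
    then obtain ws where "set ws \<subseteq> {w. inpow (M i) (S i) 1 w}" "sum_list ws = vi"
      using pow_split[OF MS[OF i]] by blast
    then show ?thesis unfolding vi_def G_def using i by blast
  qed
  obtain ixs where ixs: "set ixs = Ix" using finite_list[OF fin] by blast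
  obtain ws where ws: "sum_list ws = v" "set ws \<subseteq> G"
    using combine[of ixs S v G] each vsym disj unfolding ixs by blast
  have "ws \<noteq> []" using ws(1) ne by auto
  then show ?thesis using H2[of ws] ws unfolding G_def by auto
qed



lemma dcm_each: "distinct (concat (map f xs)) \<Longrightarrow> x \<in> set xs \<Longrightarrow> distinct (f x)"
  by (induction xs) auto

lemma dcm_disj: "distinct (concat (map f xs)) \<Longrightarrow> x \<in> set xs \<Longrightarrow> y \<in> set xs \<Longrightarrow> x \<noteq> y
   \<Longrightarrow> set (f x) \<inter> set (f y) = {}"
proof (induction xs)
  case Nil then show ?case by simp
next
  case (Cons z zs)
  show ?case
  proof (cases "x = z")
    case True
    then have "y \<in> set zs" using Cons.prems by auto
    then show ?thesis using Cons.prems(1) True by fastforce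
  next
    case False
    then have x: "x \<in> set zs" using Cons.prems by auto
    show ?thesis
    proof (cases "y = z")
      case True then show ?thesis using Cons.prems(1) x by fastforce
    next
      case False
      then have "y \<in> set zs" using Cons.prems by auto
      then show ?thesis using Cons.IH x Cons.prems by auto
    qed
  qed
qed

lemma filter_disj: "set_mset w \<inter> S = {} \<Longrightarrow> filter_mset (\<lambda>a. a \<in> S) w = {#}"
  by (induction w) auto

lemma par_restrict:
  "u \<in> foldr (\<lambda>E acc. uconc (lang E) acc) Es {{#}} \<Longrightarrow> distinct (concat (map syms Es)) \<Longrightarrow>
   E \<in> set Es \<Longrightarrow> filter_mset (\<lambda>a. a \<in> set (syms E)) u \<in> lang E"
proof (induction Es arbitrary: u)
  case Nil then show ?case by simp
next
  case (Cons E0 Es)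
  from Cons.prems(1) obtain w1 w2 where u: "u = w1 + w2" "w1 \<in> lang E0"
    "w2 \<in> foldr (\<lambda>E acc. uconc (lang E) acc) Es {{#}}"
    unfolding uconc_def by auto
  have s1: "set_mset w1 \<subseteq> set (syms E0)" using lang_syms[OF u(2)] .
  have s2: "set_mset w2 \<subseteq> set (concat (map syms Es))"
    using par_syms[OF u(3)] lang_syms by blast
  have dis: "set (syms E0) \<inter> set (concat (map syms Es)) = {}" using Cons.prems(2) by simp
  show ?case
  proof (cases "E = E0")
    case True
    have f1: "filter_mset (\<lambda>a. a \<in> set (syms E)) w1 = w1"
      unfolding True using s1 by (intro multiset_eqI) (auto simp: not_in_iff[symmetric])
    have f2: "filter_mset (\<lambda>a. a \<in> set (syms E)) w2 = {#}"
      unfolding True using s2 dis by (intro filter_disj) auto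
    have "filter_mset (\<lambda>a. a \<in> set (syms E)) u = w1"
      unfolding u(1) filter_union_mset f1 f2 by simp
    then show ?thesis using u(2) True by simp
  next
    case False
    then have E: "E \<in> set Es" using Cons.prems(3) by simp
    have "set (syms E) \<subseteq> set (concat (map syms Es))" using E by auto
    then have f1: "filter_mset (\<lambda>a. a \<in> set (syms E)) w1 = {#}"
      using s1 dis by (intro filter_disj) auto
    have "filter_mset (\<lambda>a. a \<in> set (syms E)) w2 \<in> lang E"
      using Cons.IH[OF u(3) _ E] Cons.prems(2) by simp
    moreover have "filter_mset (\<lambda>a. a \<in> set (syms E)) u = filter_mset (\<lambda>a. a \<in> set (syms E)) w2"
      unfolding u(1) filter_union_mset f1 by simp
    ultimately show ?thesis by simp
  qed
qed

lemma par_build: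
  "distinct (concat (map syms Es)) \<Longrightarrow> set_mset w \<subseteq> set (concat (map syms Es)) \<Longrightarrow>
   (\<forall>E\<in>set Es. filter_mset (\<lambda>a. a \<in> set (syms E)) w \<in> lang E) \<Longrightarrow>
   w \<in> foldr (\<lambda>E acc. uconc (lang E) acc) Es {{#}}"
proof (induction Es arbitrary: w)
  case Nil then show ?case by simp
next
  case (Cons E Es)
  define w2 where "w2 = filter_mset (\<lambda>a. a \<notin> set (syms E)) w"
  have w: "w = filter_mset (\<lambda>a. a \<in> set (syms E)) w + w2" unfolding w2_def by (rule multiset_partition)
  have dis: "set (syms E) \<inter> set (concat (map syms Es)) = {}" using Cons.prems(1) by simp
  have "set_mset w2 \<subseteq> set (concat (map syms Es))" using Cons.prems(2) unfolding w2_def by auto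
  moreover have "\<forall>E'\<in>set Es. filter_mset (\<lambda>a. a \<in> set (syms E')) w2 \<in> lang E'"
  proof
    fix E' assume E': "E' \<in> set Es"
    then have "set (syms E') \<inter> set (syms E) = {}" using dis by auto
    then have "filter_mset (\<lambda>a. a \<in> set (syms E')) w2 = filter_mset (\<lambda>a. a \<in> set (syms E')) w"
      unfolding w2_def by (intro multiset_eqI) auto
    then show "filter_mset (\<lambda>a. a \<in> set (syms E')) w2 \<in> lang E'" using Cons.prems(3) E' by simp
  qed
  ultimately have "w2 \<in> foldr (\<lambda>E acc. uconc (lang E) acc) Es {{#}}"
    using Cons.IH Cons.prems(1) by simp
  moreover have "filter_mset (\<lambda>a. a \<in> set (syms E)) w \<in> lang E" using Cons.prems(3) by simp
  ultimately show ?case using w unfolding uconc_def by auto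
qed

lemma par_transfer:
  assumes sat: "sat (lang (Par Es)) w" and dist: "distinct (concat (map syms Es))" and E: "E \<in> set Es"
  shows "sat (lang E) (filter_mset (\<lambda>a. a \<in> set (syms E)) w)"
proof -
  define S where "S = set (syms E)"
  define F where "F = (\<lambda>u. filter_mset (\<lambda>a. a \<in> S) u)"
  define LE where "LE = lang (Par Es)"
  have restr: "F u \<in> lang E" if "u \<in> LE" for u
    using par_restrict[of u Es E] that dist E unfolding F_def S_def LE_def by simp
  have symE: "set_mset u \<subseteq> S" if "u \<in> lang E" for u using lang_syms[OF that] unfolding S_def .
  obtain u0 where u0: "u0 \<in> LE" using satD(2)[OF sat] unfolding LE_def by blast
  have c2: "\<exists>u\<in>lang E. count u a = count (F w) a" for a
  proof (cases "a \<in> S")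
    case True
    obtain u where u: "u \<in> LE" "count u a = count w a" using satD(2)[OF sat] unfolding LE_def by blast
    have "F u \<in> lang E" using restr[OF u(1)] .
    moreover have "count (F u) a = count (F w) a" using u(2) True unfolding F_def by simp
    ultimately show ?thesis by blast
  next
    case False
    have "count (F u0) a = count (F w) a" unfolding F_def using False by simp
    then show ?thesis using restr[OF u0] by blast
  qed
  have "sat (lang E) (F w)"
    unfolding sat_def
  proof (intro conjI allI impI)
    fix a b assume ab: "a \<in># F w" "b \<in># F w"
    then have "a \<in># w" "b \<in># w" "a \<in> S" "b \<in> S" unfolding F_def by auto
    then obtain u where u: "u \<in> LE" "a \<in># u" "b \<in># u" using satD(1)[OF sat] unfolding LE_def by blast
    have "F u \<in> lang E" using restr[OF u(1)] .
    moreover have "a \<in># F u" "b \<in># F u" using u \<open>a \<in> S\<close> \<open>b \<in> S\<close> unfolding F_def by auto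
    ultimately show "\<exists>u\<in>lang E. a \<in># u \<and> b \<in># u" by blast
  next
    fix a show "\<exists>u\<in>lang E. count u a = count (F w) a" using c2 .
  next
    fix X assume X: "\<forall>u\<in>lang E. \<exists>a\<in>X. a \<in># u"
    have "\<forall>u\<in>LE. \<exists>a\<in>X \<inter> S. a \<in># u"
    proof
      fix u assume "u \<in> LE"
      then obtain a where "a \<in> X" "a \<in># F u" using X restr by blast
      then show "\<exists>a\<in>X \<inter> S. a \<in># u" unfolding F_def by auto
    qed
    then obtain a where "a \<in> X \<inter> S" "a \<in># w" using satD(3)[OF sat, of "X \<inter> S"] unfolding LE_def by blast
    then show "\<exists>a\<in>X. a \<in># F w" unfolding F_def by auto
  next
    fix a b assume h: "\<forall>u\<in>lang E. count u b \<le> count u a"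
    show "count (F w) b \<le> count (F w) a"
    proof (cases "b \<in> S")
      case False then show ?thesis unfolding F_def by simp
    next
      case bS: True
      show ?thesis
      proof (cases "a \<in> S")
        case True
        have "\<forall>u\<in>LE. count u b \<le> count u a"
        proof
          fix u assume "u \<in> LE"
          then have "count (F u) b \<le> count (F u) a" using h restr by blast
          then show "count u b \<le> count u a" using bS True unfolding F_def by simp
        qed
        then have "count w b \<le> count w a" using satD(4)[OF sat] unfolding LE_def by blast
        then show ?thesis using bS True unfolding F_def by simp
      next
        case False
        obtain u where u: "u \<in> lang E" "count u b = count (F w) b" using c2 by blast
        have "count u a = 0" using symE[OF u(1)] False by (auto simp: not_in_iff[symmetric])
        then have "count u b = 0" using h u(1) by fastforce
        then show ?thesis using u(2) by simp
      qed
    qed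
  qed
  then show ?thesis unfolding F_def S_def .
qed



lemma alt_lang: "lang (Alt (map (\<lambda>(A, I). Rep A I) ys)) = (\<Union>p\<in>set ys. rep_lang (lang (fst p)) (snd p))"
  by (induction ys) (auto split: prod.splits)

lemma alt_syms: "syms (Alt (map (\<lambda>(A, I). Rep A I) ys)) = concat (map (\<lambda>p. syms (fst p)) ys)"
  by (induction ys) (auto split: prod.splits)

lemma pair_lang:
  assumes "is_atom A" "distinct (syms A)"
  shows "rep_lang (lang A) J = {u. \<exists>k. fst J \<le> k \<and> enat k \<le> fst (snd J) \<and> inpow (Mof A) (set (syms A)) k u}
     \<union> (if snd (snd J) then {{#}} else {})"
proof -
  obtain n m q where J: "J = (n,m,q)" by (cases J) auto
  show ?thesis unfolding J atom_lang(2)[OF assms] using rep_pow[OF atom_lang(1)[OF assms]] by simp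
qed

lemma clause_ok:
  assumes cl: "is_clause D" and I: "I \<in> {I_one, I_opt}" and dist: "distinct (syms D)"
    and sat: "sat (lang (Rep D I)) v"
  shows "v \<in> lang (Rep D I)"
proof (cases "v = {#}")
  case True then show ?thesis using sat_empty sat by blast
next
  case False
  obtain ys where D: "D = Alt (map (\<lambda>(A, I). Rep A I) ys)" and ats: "\<forall>(A, I) \<in> set ys. is_atom A"
    using cl unfolding is_clause_def by blast
  define S where "S = (\<lambda>p::'a expr \<times> interval. set (syms (fst p)))"
  define M where "M = (\<lambda>p::'a expr \<times> interval. Mof (fst p))"
  define n where "n = (\<lambda>p::'a expr \<times> interval. fst (snd p))"
  define m where "m = (\<lambda>p::'a expr \<times> interval. fst (snd (snd p)))"
  have dD: "distinct (concat (map (\<lambda>p. syms (fst p)) ys))" using dist unfolding D alt_syms .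
  have at: "is_atom (fst p)" "distinct (syms (fst p))" if "p \<in> set ys" for p
    using ats that dcm_each[OF dD that] by auto
  have pl: "rep_lang (lang (fst p)) (snd p) = {u. \<exists>k. n p \<le> k \<and> enat k \<le> m p \<and> inpow (M p) (S p) k u}
     \<union> (if snd (snd (snd p)) then {{#}} else {})" if "p \<in> set ys" for p
    unfolding n_def m_def M_def S_def using pair_lang[OF at[OF that]] .
  have langD: "lang D = (\<Union>p\<in>set ys. rep_lang (lang (fst p)) (snd p))" unfolding D alt_lang ..
  have LI: "lang (Rep D I) = lang D \<or> lang (Rep D I) = insert {#} (lang D)"
    using I by (auto simp: rep_one rep_opt)
  show ?thesis
  proof (rule clause_core[where Ix = "set ys" and S = S and M = M and n = n and m = m])
    show "sat (lang (Rep D I)) v" by (rule sat)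
    show "v \<noteq> {#}" by (rule False)
  next
    fix u assume u: "u \<in> lang (Rep D I)" "u \<noteq> {#}"
    then have "u \<in> lang D" using LI by auto
    then obtain p where p: "p \<in> set ys" "u \<in> rep_lang (lang (fst p)) (snd p)" unfolding langD by blast
    then show "\<exists>i\<in>set ys. \<exists>k. n i \<le> k \<and> enat k \<le> m i \<and> inpow (M i) (S i) k u"
      using pl[OF p(1)] u(2) by (auto split: if_splits)
  next
    fix i k u assume "i \<in> set ys" "n i \<le> k" "enat k \<le> m i" "inpow (M i) (S i) k u"
    then have "u \<in> rep_lang (lang (fst i)) (snd i)" using pl by auto
    then have "u \<in> lang D" unfolding langD using \<open>i \<in> set ys\<close> by blast
    then show "u \<in> lang (Rep D I)" using LI by auto
  next
    fix i j assume "i \<in> set ys" "j \<in> set ys" "i \<noteq> j"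
    then show "S i \<inter> S j = {}" unfolding S_def using dcm_disj[OF dD] by blast
  next
    fix i assume "i \<in> set ys"
    then show "M i \<subseteq> S i" unfolding M_def S_def using atom_lang(1)[OF at] by blast
  qed
qed



lemma count_sum_list_le:
  "(\<forall>w\<in>set ws. count w d \<le> count w c) \<Longrightarrow> count (sum_list ws) d \<le> count (sum_list ws) c"
  by (induction ws) (auto intro: add_mono)

lemma star_ok:
  assumes cl: "is_simple_clause D" and I: "I \<in> {I_plus, I_star}" and dist: "distinct (syms D)"
    and sat: "sat (lang (Rep D I)) v"
  shows "v \<in> lang (Rep D I)"
proof (cases "v = {#}")
  case True then show ?thesis using sat_empty sat by blast
next
  case False
  obtain ys where D: "D = Alt (map (\<lambda>(A, I). Rep A I) ys)"
    and ats: "\<forall>(A, I) \<in> set ys. is_atom A \<and> I \<in> {I_opt, I_one}"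
    using cl unfolding is_simple_clause_def by blast
  define S where "S = (\<lambda>p::'a expr \<times> interval. set (syms (fst p)))"
  define M where "M = (\<lambda>p::'a expr \<times> interval. Mof (fst p))"
  define n where "n = (\<lambda>p::'a expr \<times> interval. fst (snd p))"
  define m where "m = (\<lambda>p::'a expr \<times> interval. fst (snd (snd p)))"
  have dD: "distinct (concat (map (\<lambda>p. syms (fst p)) ys))" using dist unfolding D alt_syms .
  have at: "is_atom (fst p)" "distinct (syms (fst p))" if "p \<in> set ys" for p
    using ats that dcm_each[OF dD that] by auto
  have J: "snd p \<in> {I_opt, I_one}" if "p \<in> set ys" for p using ats that by auto
  have pl: "rep_lang (lang (fst p)) (snd p) = {u. \<exists>k. n p \<le> k \<and> enat k \<le> m p \<and> inpow (M p) (S p) k u}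
     \<union> (if snd (snd (snd p)) then {{#}} else {})" if "p \<in> set ys" for p
    unfolding n_def m_def M_def S_def using pair_lang[OF at[OF that]] .
  have langD: "lang D = (\<Union>p\<in>set ys. rep_lang (lang (fst p)) (snd p))" unfolding D alt_lang ..
  have disj: "S i \<inter> S j = {}" if "i \<in> set ys" "j \<in> set ys" "i \<noteq> j" for i j
    using that unfolding S_def using dcm_disj[OF dD] by blast
  have MS: "M i \<subseteq> S i" if "i \<in> set ys" for i
    unfolding M_def S_def using atom_lang(1)[OF at[OF that]] by blast
  have Lsub: "\<exists>ws. u = sum_list ws \<and> set ws \<subseteq> lang D" if "u \<in> lang (Rep D I)" for u
    using that I unfolding I_plus_def I_star_def by (auto simp: rep_lang_def)
  have Lsup: "sum_list ws \<in> lang (Rep D I)" if "ws \<noteq> []" "set ws \<subseteq> lang D" for ws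
  proof -
    have "1 \<le> length ws" using that(1) by (cases ws) auto
    then show ?thesis using that(2) I unfolding I_plus_def I_star_def by (auto simp: rep_lang_def)
  qed
  have wD: "count w d \<le> count w c" if w: "w \<in> lang D" and i: "i \<in> set ys" and c: "c \<in> M i" and d: "d \<in> S i"
    for w i c d
  proof -
    obtain p where p: "p \<in> set ys" "w \<in> rep_lang (lang (fst p)) (snd p)" using w unfolding langD by blast
    show ?thesis
    proof (cases "w = {#}")
      case True then show ?thesis by simp
    next
      case False
      then obtain k where k: "inpow (M p) (S p) k w" using pl[OF p(1)] p(2) by (auto split: if_splits)
      show ?thesis
      proof (cases "p = i")
        case True then show ?thesis using k c d unfolding inpow_def by auto
      next
        case False
        then have "d \<notin> S p" using disj[OF p(1) i] d by blast
        then show ?thesis using k unfolding inpow_def by auto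
      qed
    qed
  qed
  show ?thesis
  proof (rule star_core[where Ix = "set ys" and S = S and M = M])
    show "sat (lang (Rep D I)) v" by (rule sat)
    show "v \<noteq> {#}" by (rule False)
  next
    fix u i c d assume "u \<in> lang (Rep D I)" "i \<in> set ys" "c \<in> M i" "d \<in> S i"
    note h = this
    obtain ws where ws: "u = sum_list ws" "set ws \<subseteq> lang D" using Lsub[OF h(1)] by blast
    have "\<forall>w\<in>set ws. count w d \<le> count w c" using ws(2) wD[OF _ h(2,3,4)] by blast
    then show "count u d \<le> count u c" unfolding ws(1) by (rule count_sum_list_le)
  next
    fix u a assume "u \<in> lang (Rep D I)" "a \<in># u"
    then have "a \<in> set (syms (Rep D I))" using lang_syms by blast
    then have "a \<in> set (syms D)" by simp
    then have "a \<in> set (concat (map (\<lambda>p. syms (fst p)) ys))" unfolding D alt_syms .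
    then show "\<exists>i\<in>set ys. a \<in> S i" unfolding S_def by auto
  next
    fix ws :: "'a uword list"
    assume ws: "ws \<noteq> []" "\<forall>w\<in>set ws. \<exists>i\<in>set ys. inpow (M i) (S i) 1 w"
    have "set ws \<subseteq> lang D"
    proof
      fix w assume "w \<in> set ws"
      then obtain i where i: "i \<in> set ys" "inpow (M i) (S i) 1 w" using ws(2) by blast
      have "n i \<le> 1" "enat 1 \<le> m i" using J[OF i(1)] unfolding n_def m_def I_opt_def I_one_def by (auto simp: enat_le_1)
      then have "w \<in> rep_lang (lang (fst i)) (snd i)" using pl[OF i(1)] i(2) by auto
      then show "w \<in> lang D" unfolding langD using i(1) by blast
    qed
    then show "sum_list ws \<in> lang (Rep D I)" using Lsup ws(1) by blast
  next
    show "\<And>i j. i \<in> set ys \<Longrightarrow> j \<in> set ys \<Longrightarrow> i \<noteq> j \<Longrightarrow> S i \<inter> S j = {}" by (rule disj)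
    show "\<And>i. i \<in> set ys \<Longrightarrow> M i \<subseteq> S i" by (rule MS)
    show "finite (set ys)" by simp
  qed
qed

lemma dime_complete:
  assumes dime: "is_DIME E" and sat: "sat (lang E) w"
  shows "w \<in> lang E"
proof -
  obtain xs where E: "E = Par (map (\<lambda>(D, I). Rep D I) xs)"
    and comp: "\<forall>(D, I) \<in> set xs. (is_simple_clause D \<and> I \<in> {I_plus, I_star})
                           \<or> (is_clause D \<and> I \<in> {I_one, I_opt})"
    and dist: "distinct (syms E)"
    using dime unfolding is_DIME_def by blast
  define Es where "Es = map (\<lambda>(D, I). Rep D I) xs"
  have dEs: "distinct (concat (map syms Es))" using dist unfolding E Es_def by simp
  have satP: "sat (lang (Par Es)) w" using sat unfolding E Es_def .
  have symw: "set_mset w \<subseteq> set (concat (map syms Es))"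
  proof
    fix a assume a: "a \<in># w"
    obtain u where u: "u \<in> lang E" "count u a = count w a" using satD(2)[OF sat] by blast
    then have "a \<in># u" using a by (metis count_eq_zero_iff)
    then have "a \<in> set (syms E)" using lang_syms[OF u(1)] by blast
    then show "a \<in> set (concat (map syms Es))" unfolding E Es_def by simp
  qed
  have each: "\<forall>E'\<in>set Es. filter_mset (\<lambda>a. a \<in> set (syms E')) w \<in> lang E'"
  proof
    fix E' assume E': "E' \<in> set Es"
    then obtain D I where DI: "(D, I) \<in> set xs" "E' = Rep D I" unfolding Es_def by auto
    have dD: "distinct (syms D)" using dcm_each[OF dEs E'] DI(2) by simp
    have s: "sat (lang E') (filter_mset (\<lambda>a. a \<in> set (syms E')) w)"
      by (rule par_transfer[OF satP dEs E'])
    then have s': "sat (lang (Rep D I)) (filter_mset (\<lambda>a. a \<in> set (syms E')) w)" using DI(2) by simp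
    from comp DI(1) have "(is_simple_clause D \<and> I \<in> {I_plus, I_star}) \<or> (is_clause D \<and> I \<in> {I_one, I_opt})"
      by auto
    then show "filter_mset (\<lambda>a. a \<in> set (syms E')) w \<in> lang E'"
      using star_ok[OF _ _ dD s'] clause_ok[OF _ _ dD s'] DI(2) by blast
  qed
  have "w \<in> lang (Par Es)" using par_build[OF dEs symw each] by simp
  then show ?thesis unfolding E Es_def .
qed

theorem lemma2:
  fixes E E' :: "('a::finite) expr"
  assumes "is_DIME E" and "is_DIME E'"
  shows "lang E' \<subseteq> lang E \<longleftrightarrow> delta_le (Delta E') (Delta E)"
proof
  assume sub: "lang E' \<subseteq> lang E"
  show "delta_le (Delta E') (Delta E)"
  proof -
    have "C_of E \<subseteq> C_of E'" unfolding C_of_def using sub by blast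
    moreover have "N_of E' \<subseteq> N_of E" unfolding N_of_def using sub by blast
    moreover have "P_of E \<subseteq> P_of E'" unfolding P_of_def using sub by blast
    moreover have "K_of E \<subseteq> K_of E'" unfolding K_of_def using sub by blast
    ultimately show ?thesis unfolding delta_le_def Delta_def by simp
  qed
next
  assume d: "delta_le (Delta E') (Delta E)"
  show "lang E' \<subseteq> lang E"
  proof
    fix w assume "w \<in> lang E'"
    then have "sat (lang E') w" by (rule sat_mem)
    then have "sat (lang E) w" by (rule sat_mono[OF d])
    then show "w \<in> lang E" by (rule dime_complete[OF assms(1)])
  qed
qed

end
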